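(* Let $\alpha$ be a sequence such that $M(\alpha)$ is a bounded multiplicative Hankel operator on $\ell^2(\mathbb{N})$. For $0<r<1$ let $\alpha_r=D_r\alpha$. Then $M(\alpha_r)$ is a compact operator on $\ell^2(\mathbb{N})$, $\|M(\alpha_r)\|_{\mathcal{B}(\ell^2(\mathbb{N}))}\le\|M(\alpha)\|_{\mathcal{B}(\ell^2(\mathbb{N}))}$, and $M(\alpha_r)\to M(\alpha)$ and $M(\alpha_r)^*\to M(\alpha)^*$ in the strong operator topology as $r\to1$.
   Context: For a sequence $\alpha\colon\mathbb{N}\to\mathbb{C}$, $M(\alpha)$ is defined by $\langle M(\alpha)a,b\rangle_{\ell^2(\mathbb{N})}=\sum_{n,m}a(n)\overline{b(m)}\alpha(nm)$ for finitely supported $a,b$, and is bounded if it extends to a bounded operator on $\ell^2(\mathbb{N})$. Let $p_1<p_2<\dots$ be the primes. For a sequence $a$ and $0<r<1$, $D_ra(n)=r^{\sum_{j\ge1}j\kappa_j}a(n)$ where $n=\prod_{j\ge1}p_j^{\kappa_j}$. *)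

theory Defs
  imports "HOL-Analysis.Analysis" "HOL-Computational_Algebra.Primes"
begin

text \<open>Sequences on \<open>\<nat> = {1,2,...}\<close> are modelled as functions \<open>nat \<Rightarrow> complex\<close>
  that vanish at 0.\<close>

definition l2 :: "(nat \<Rightarrow> complex) set" where
  "l2 = {a. a 0 = 0 \<and> (\<lambda>n. (cmod (a n))\<^sup>2) summable_on UNIV}"

definition l2norm :: "(nat \<Rightarrow> complex) \<Rightarrow> real" where
  "l2norm a = sqrt (infsum (\<lambda>n. (cmod (a n))\<^sup>2) UNIV)"

definition fin_supp :: "(nat \<Rightarrow> complex) \<Rightarrow> bool" where
  "fin_supp a \<longleftrightarrow> a 0 = 0 \<and> finite {n. a n \<noteq> 0}"

definition Mform :: "(nat \<Rightarrow> complex) \<Rightarrow> (nat \<Rightarrow> complex) \<Rightarrow> (nat \<Rightarrow> complex) \<Rightarrow> complex" where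
  "Mform \<alpha> a b = (\<Sum>n\<in>{n. a n \<noteq> 0}. \<Sum>m\<in>{m. b m \<noteq> 0}. a n * cnj (b m) * \<alpha> (n * m))"

definition bounded_M :: "(nat \<Rightarrow> complex) \<Rightarrow> bool" where
  "bounded_M \<alpha> \<longleftrightarrow> (\<exists>C. \<forall>a b. fin_supp a \<longrightarrow> fin_supp b \<longrightarrow>
      cmod (Mform \<alpha> a b) \<le> C * l2norm a * l2norm b)"

definition Mop :: "(nat \<Rightarrow> complex) \<Rightarrow> (nat \<Rightarrow> complex) \<Rightarrow> nat \<Rightarrow> complex" where
  "Mop \<alpha> a m = (if m = 0 then 0 else infsum (\<lambda>n. \<alpha> (n * m) * a n) {1..})"

text \<open>Action of the adjoint \<open>M(\<alpha>)^*\<close>: \<open>(M(\<alpha>)^* a)(m) = \<Sum>_n conj(\<alpha>(nm)) a(n)\<close>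
  (the conjugate transpose of the symmetric matrix \<open>(\<alpha>(nm))\<close>).\<close>
definition Madj :: "(nat \<Rightarrow> complex) \<Rightarrow> (nat \<Rightarrow> complex) \<Rightarrow> nat \<Rightarrow> complex" where
  "Madj \<alpha> a m = (if m = 0 then 0 else infsum (\<lambda>n. cnj (\<alpha> (n * m)) * a n) {1..})"

definition Mnorm :: "(nat \<Rightarrow> complex) \<Rightarrow> real" where
  "Mnorm \<alpha> = Sup {l2norm (Mop \<alpha> a) | a. a \<in> l2 \<and> l2norm a \<le> 1}"

definition compact_M :: "(nat \<Rightarrow> complex) \<Rightarrow> bool" where
  "compact_M \<alpha> \<longleftrightarrow> (\<forall>a\<in>l2. Mop \<alpha> a \<in> l2) \<and>
     (\<forall>x :: nat \<Rightarrow> nat \<Rightarrow> complex. (\<forall>k. x k \<in> l2 \<and> l2norm (x k) \<le> 1) \<longrightarrow>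
        (\<exists>(s :: nat \<Rightarrow> nat) y. strict_mono s \<and> y \<in> l2 \<and>
           (\<lambda>k. l2norm (\<lambda>m. Mop \<alpha> (x (s k)) m - y m)) \<longlonglongrightarrow> 0))"

text \<open>Index of a prime: \<open>prime_index (p_j) = j\<close> where \<open>p_1 < p_2 < \<dots>\<close> are the primes.\<close>
definition prime_index :: "nat \<Rightarrow> nat" where
  "prime_index p = card {q. prime q \<and> q \<le> p}"

definition weight :: "nat \<Rightarrow> nat" where
  "weight n = (\<Sum>p\<in>prime_factors n. prime_index p * multiplicity p n)"

definition Dr :: "real \<Rightarrow> (nat \<Rightarrow> complex) \<Rightarrow> nat \<Rightarrow> complex" where
  "Dr r a n = complex_of_real (r ^ weight n) * a n"

end

theory Submission
  imports Defs
begin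

lemma weight_mult:
  assumes "n > 0" "m > 0"
  shows "weight (n*m) = weight n + weight m"
proof -
  let ?U = "prime_factors n \<union> prime_factors m"
  let ?f = "\<lambda>k p. prime_index p * multiplicity p k"
  have fin: "finite ?U" by simp
  have z: "multiplicity p k = 0" if "p \<in> ?U" "p \<notin> prime_factors k" "k > 0" for p k :: nat
  proof -
    have "prime p" using that(1) by auto
    then have "\<not> p dvd k" using that by (auto simp: in_prime_factors_iff)
    then show ?thesis by (rule not_dvd_imp_multiplicity_0)
  qed
  have zn: "\<forall>p\<in>?U - prime_factors n. ?f n p = 0"
  proof
    fix p assume "p \<in> ?U - prime_factors n"
    then have "multiplicity p n = 0" using z[of p n] assms by blast
    then show "?f n p = 0" by simp
  qed
  have wn: "weight n = (\<Sum>p\<in>?U. ?f n p)"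
    unfolding weight_def by (rule sum.mono_neutral_right[OF fin _ zn, symmetric]) auto
  have zm: "\<forall>p\<in>?U - prime_factors m. ?f m p = 0"
  proof
    fix p assume "p \<in> ?U - prime_factors m"
    then have "multiplicity p m = 0" using z[of p m] assms by blast
    then show "?f m p = 0" by simp
  qed
  have wm: "weight m = (\<Sum>p\<in>?U. ?f m p)"
    unfolding weight_def by (rule sum.mono_neutral_right[OF fin _ zm, symmetric]) auto
  have "weight (n*m) = (\<Sum>p\<in>?U. ?f (n*m) p)"
    unfolding weight_def using assms by (simp add: prime_factors_product)
  also have "\<dots> = (\<Sum>p\<in>?U. ?f n p + ?f m p)"
  proof (intro sum.cong refl)
    fix p assume "p \<in> ?U"
    then have "prime p" by auto
    then show "?f (n*m) p = ?f n p + ?f m p"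
      using assms by (simp add: prime_elem_multiplicity_mult_distrib algebra_simps)
  qed
  also have "\<dots> = (\<Sum>p\<in>?U. ?f n p) + (\<Sum>p\<in>?U. ?f m p)" by (rule sum.distrib)
  finally show ?thesis using wn wm by simp
qed

lemma prime_index_pos: "prime p \<Longrightarrow> prime_index p \<ge> 1"
proof -
  assume p: "prime p"
  have "finite {q. prime q \<and> q \<le> p}" by (rule finite_subset[of _ "{..p}"]) auto
  moreover have "p \<in> {q. prime q \<and> q \<le> p}" using p by auto
  ultimately have "card {q. prime q \<and> q \<le> p} > 0" using card_gt_0_iff by blast
  then show ?thesis unfolding prime_index_def by simp
qed

lemma prime_index_less: "prime p \<Longrightarrow> prime q \<Longrightarrow> p < q \<Longrightarrow> prime_index p < prime_index q"
proof -
  assume pq: "prime p" "prime q" "p < q"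
  have "finite {x. prime x \<and> x \<le> q}" by (rule finite_subset[of _ "{..q}"]) auto
  moreover have "{x. prime x \<and> x \<le> p} \<subset> {x. prime x \<and> x \<le> q}"
  proof
    show "{x. prime x \<and> x \<le> p} \<subseteq> {x. prime x \<and> x \<le> q}" using pq by auto
    have "q \<notin> {x. prime x \<and> x \<le> p}" "q \<in> {x. prime x \<and> x \<le> q}" using pq by auto
    then show "{x. prime x \<and> x \<le> p} \<noteq> {x. prime x \<and> x \<le> q}" by blast
  qed
  ultimately show ?thesis unfolding prime_index_def by (rule psubset_card_mono)
qed

lemma finite_weight_le: "finite {n. weight n \<le> K}"
proof -
  define P where "P = {p. prime p \<and> prime_index p \<le> K}"
  have "inj_on prime_index P"
  proof (rule inj_onI)
    fix p q assume "p \<in> P" "q \<in> P" "prime_index p = prime_index q"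
    then have "prime p" "prime q" "prime_index p = prime_index q" unfolding P_def by auto
    show "p = q"
    proof (rule ccontr)
      assume "p \<noteq> q"
      then consider "p < q" | "q < p" by linarith
      then show False using prime_index_less[of p q] prime_index_less[of q p] \<open>prime p\<close> \<open>prime q\<close> \<open>prime_index p = prime_index q\<close>
        by cases auto
    qed
  qed
  moreover have "prime_index ` P \<subseteq> {..K}" unfolding P_def by auto
  then have "finite (prime_index ` P)" by (rule finite_subset) simp
  ultimately have finP: "finite P" using finite_imageD by blast
  define Q where "Q = (\<Prod>p\<in>P. p ^ K)"
  have Qpos: "Q > 0" unfolding Q_def P_def by (intro prod_pos) (auto simp: prime_gt_0_nat)
  have "n dvd Q" if n: "n > 0" "weight n \<le> K" for n
  proof -
    have le: "prime_index p * multiplicity p n \<le> K" if "p \<in> prime_factors n" for p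
    proof -
      have "prime_index p * multiplicity p n \<le> weight n"
        unfolding weight_def by (rule member_le_sum) (use that in auto)
      then show ?thesis using n by linarith
    qed
    have sub: "prime_factors n \<subseteq> P"
    proof
      fix p assume p: "p \<in> prime_factors n"
      have "prime p" using p by auto
      have "multiplicity p n \<ge> 1" using p n
        by (simp add: prime_factors_multiplicity)
      then have "prime_index p \<le> prime_index p * multiplicity p n"
        by (metis mult.right_neutral mult_le_mono2)
      then have "prime_index p \<le> K" using le[OF p] le_trans by blast
      with \<open>prime p\<close> show "p \<in> P" unfolding P_def by simp
    qed
    have mle: "multiplicity p n \<le> K" if "p \<in> prime_factors n" for p
    proof -
      have "1 \<le> prime_index p" using that prime_index_pos by auto
      then have "multiplicity p n \<le> prime_index p * multiplicity p n"
        by (metis mult_1 mult_le_mono1)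
      with le[OF that] show ?thesis using le_trans by blast
    qed
    have "n = (\<Prod>p\<in>prime_factors n. p ^ multiplicity p n)" using n prime_factorization_nat by blast
    also have "\<dots> dvd (\<Prod>p\<in>prime_factors n. p ^ K)"
      by (intro prod_dvd_prod le_imp_power_dvd mle)
    also have "\<dots> dvd Q" unfolding Q_def by (rule prod_dvd_prod_subset[OF finP sub])
    finally show ?thesis .
  qed
  then have "{n. weight n \<le> K} \<subseteq> insert 0 {d. d dvd Q}" by auto
  moreover have "finite (insert 0 {d. d dvd Q})" using Qpos by simp
  ultimately show ?thesis by (rule finite_subset)
qed

definition sqs :: "(nat \<Rightarrow> complex) \<Rightarrow> bool" where
  "sqs a \<longleftrightarrow> (\<lambda>n. (cmod (a n))\<^sup>2) summable_on UNIV"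

definition NN :: "(nat \<Rightarrow> complex) \<Rightarrow> real" where
  "NN a = infsum (\<lambda>n. (cmod (a n))\<^sup>2) UNIV"

lemma l2_iff: "a \<in> l2 \<longleftrightarrow> a 0 = 0 \<and> sqs a"
  by (simp add: l2_def sqs_def)

lemma l2norm_NN: "l2norm a = sqrt (NN a)"
  by (simp add: l2norm_def NN_def)

lemma NN_nonneg: "NN a \<ge> 0"
  unfolding NN_def by (rule infsum_nonneg) simp

lemma sqs_NN_bound:
  assumes "\<And>F. finite F \<Longrightarrow> (\<Sum>n\<in>F. (cmod (a n))\<^sup>2) \<le> B"
  shows "sqs a" "NN a \<le> B"
proof -
  show s: "sqs a" unfolding sqs_def
    by (rule nonneg_bdd_above_summable_on) (use assms in \<open>auto intro!: bdd_aboveI2\<close>)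
  show "NN a \<le> B" unfolding NN_def
    by (rule infsum_le_finite_sums) (use s assms in \<open>auto simp: sqs_def\<close>)
qed

lemma sum_le_NN:
  assumes "sqs a" "finite F"
  shows "(\<Sum>n\<in>F. (cmod (a n))\<^sup>2) \<le> NN a"
  unfolding NN_def by (rule finite_sum_le_infsum) (use assms in \<open>auto simp: sqs_def\<close>)

lemma NN_finite:
  assumes "finite S" "\<And>n. n \<notin> S \<Longrightarrow> a n = 0"
  shows "NN a = (\<Sum>n\<in>S. (cmod (a n))\<^sup>2)" "sqs a"
proof -
  have "infsum (\<lambda>n. (cmod (a n))\<^sup>2) UNIV = infsum (\<lambda>n. (cmod (a n))\<^sup>2) S"
    by (rule infsum_cong_neutral) (use assms in auto)
  then show "NN a = (\<Sum>n\<in>S. (cmod (a n))\<^sup>2)" unfolding NN_def using assms by simp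
  show "sqs a" using sqs_NN_bound(1)[of a "\<Sum>n\<in>S. (cmod (a n))\<^sup>2"]
  proof -
    have "(\<Sum>n\<in>F. (cmod (a n))\<^sup>2) \<le> (\<Sum>n\<in>S. (cmod (a n))\<^sup>2)" if "finite F" for F
    proof -
      have "(\<Sum>n\<in>F. (cmod (a n))\<^sup>2) = (\<Sum>n\<in>F \<inter> S. (cmod (a n))\<^sup>2)"
        by (rule sum.mono_neutral_right) (use that assms in auto)
      also have "\<dots> \<le> (\<Sum>n\<in>S. (cmod (a n))\<^sup>2)"
        by (rule sum_mono2) (use assms in auto)
      finally show ?thesis .
    qed
    then show ?thesis by (rule sqs_NN_bound(1))
  qed
qed

lemma sqs_compare:
  assumes "sqs b" "\<And>n. cmod (a n) \<le> c * cmod (b n)"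
  shows "sqs a" "NN a \<le> c\<^sup>2 * NN b"
proof -
  have le: "(cmod (a n))\<^sup>2 \<le> c\<^sup>2 * (cmod (b n))\<^sup>2" for n
  proof -
    have "(cmod (a n))\<^sup>2 \<le> (c * cmod (b n))\<^sup>2"
      by (rule power_mono[OF assms(2)]) simp
    then show ?thesis by (simp add: power_mult_distrib)
  qed
  have s: "(\<lambda>n. c\<^sup>2 * (cmod (b n))\<^sup>2) summable_on UNIV"
    using assms(1) unfolding sqs_def by (rule summable_on_cmult_right)
  show sa: "sqs a" unfolding sqs_def
    by (rule summable_on_comparison_test[OF s]) (use le in auto)
  have "NN a \<le> infsum (\<lambda>n. c\<^sup>2 * (cmod (b n))\<^sup>2) UNIV"
    unfolding NN_def by (rule infsum_mono) (use sa s le in \<open>auto simp: sqs_def\<close>)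
  also have "\<dots> = c\<^sup>2 * NN b" unfolding NN_def by (rule infsum_cmult_right') 
  finally show "NN a \<le> c\<^sup>2 * NN b" .
qed

lemma sq_add_le: "(cmod (x + y))\<^sup>2 \<le> 2 * (cmod x)\<^sup>2 + 2 * (cmod y)\<^sup>2"
proof -
  have "(cmod (x + y))\<^sup>2 \<le> (cmod x + cmod y)\<^sup>2"
    by (rule power_mono[OF norm_triangle_ineq]) simp
  also have "\<dots> \<le> 2 * (cmod x)\<^sup>2 + 2 * (cmod y)\<^sup>2"
  proof -
    have "0 \<le> (cmod x - cmod y)\<^sup>2" by simp
    then show ?thesis unfolding power2_sum power2_diff by linarith
  qed
  finally show ?thesis .
qed

lemma sqs_add:
  assumes "sqs a" "sqs b"
  shows "sqs (\<lambda>n. a n + b n)" "NN (\<lambda>n. a n + b n) \<le> 2 * NN a + 2 * NN b"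
proof -
  have s: "(\<lambda>n. 2 * (cmod (a n))\<^sup>2 + 2 * (cmod (b n))\<^sup>2) summable_on UNIV"
    using assms unfolding sqs_def by (intro summable_on_add summable_on_cmult_right)
  show sa: "sqs (\<lambda>n. a n + b n)" unfolding sqs_def
    by (rule summable_on_comparison_test[OF s]) (use sq_add_le in auto)
  have "NN (\<lambda>n. a n + b n) \<le> infsum (\<lambda>n. 2 * (cmod (a n))\<^sup>2 + 2 * (cmod (b n))\<^sup>2) UNIV"
    unfolding NN_def by (rule infsum_mono) (use sa s sq_add_le in \<open>auto simp: sqs_def\<close>)
  also have "\<dots> = 2 * NN a + 2 * NN b" unfolding NN_def
    using assms unfolding sqs_def
    by (subst infsum_add) (auto intro: summable_on_cmult_right simp: infsum_cmult_right')
  finally show "NN (\<lambda>n. a n + b n) \<le> 2 * NN a + 2 * NN b" .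
qed

lemma sqs_uminus: "sqs (\<lambda>n. - a n) = sqs a" "NN (\<lambda>n. - a n) = NN a"
  by (simp_all add: sqs_def NN_def)

lemma sqs_cnj: "sqs (\<lambda>n. cnj (a n)) = sqs a" "NN (\<lambda>n. cnj (a n)) = NN a"
  by (simp_all add: sqs_def NN_def)

lemma sqs_diff:
  assumes "sqs a" "sqs b"
  shows "sqs (\<lambda>n. a n - b n)" "NN (\<lambda>n. a n - b n) \<le> 2 * NN a + 2 * NN b"
  using sqs_add[of a "\<lambda>n. - b n"] assms sqs_uminus[of b] by simp_all

lemma Dr_le: "0 \<le> r \<Longrightarrow> r \<le> 1 \<Longrightarrow> cmod (Dr r a n) \<le> 1 * cmod (a n)"
proof -
  assume r: "0 \<le> r" "r \<le> 1"
  have "cmod (Dr r a n) = r ^ weight n * cmod (a n)"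
    unfolding Dr_def using r by (simp add: norm_mult norm_power)
  also have "\<dots> \<le> 1 * cmod (a n)"
    by (rule mult_right_mono) (use r in \<open>auto simp: power_le_one\<close>)
  finally show ?thesis .
qed

lemma Dr_sqs: "0 \<le> r \<Longrightarrow> r \<le> 1 \<Longrightarrow> sqs a \<Longrightarrow> sqs (Dr r a) \<and> NN (Dr r a) \<le> NN a"
  using sqs_compare[of a "Dr r a" 1] Dr_le by auto

lemma Dr_l2: "0 \<le> r \<Longrightarrow> r \<le> 1 \<Longrightarrow> a \<in> l2 \<Longrightarrow> Dr r a \<in> l2"
  using Dr_sqs by (auto simp: l2_iff Dr_def)

lemma infsum_diff':
  fixes f g :: "'a \<Rightarrow> complex"
  assumes "f summable_on A" "g summable_on A"
  shows "infsum (\<lambda>x. f x - g x) A = infsum f A - infsum g A"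
proof -
  have "infsum (\<lambda>x. f x + - g x) A = infsum f A + infsum (\<lambda>x. - g x) A"
    by (rule infsum_add) (use assms in \<open>auto simp: summable_on_uminus\<close>)
  then show ?thesis by (simp add: infsum_uminus)
qed

lemma summable_on_diff':
  fixes f g :: "'a \<Rightarrow> complex"
  assumes "f summable_on A" "g summable_on A"
  shows "(\<lambda>x. f x - g x) summable_on A"
  using summable_on_add[of f A "\<lambda>x. - g x"] assms by (simp add: summable_on_uminus)

lemma has_sum_sum':
  fixes f :: "'i \<Rightarrow> 'a \<Rightarrow> complex"
  assumes "finite I" "\<And>i. i \<in> I \<Longrightarrow> f i summable_on A"
  shows "(\<lambda>x. \<Sum>i\<in>I. f i x) summable_on A \<and> infsum (\<lambda>x. \<Sum>i\<in>I. f i x) A = (\<Sum>i\<in>I. infsum (f i) A)"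
  using assms
proof (induction I rule: finite_induct)
  case empty
  then show ?case by simp
next
  case (insert i I)
  then have "(\<lambda>x. \<Sum>i\<in>I. f i x) summable_on A" "infsum (\<lambda>x. \<Sum>i\<in>I. f i x) A = (\<Sum>i\<in>I. infsum (f i) A)"
    "f i summable_on A" by auto
  then show ?case using insert.hyps
    by (auto simp: infsum_add intro: summable_on_add)
qed

lemma cnj_mult_self: "cnj z * z = complex_of_real ((cmod z)\<^sup>2)"
  by (metis complex_norm_square mult.commute)

lemma sq_bound:
  fixes S K :: real
  assumes "S \<ge> 0" "K \<ge> 0" "S \<le> K * sqrt S"
  shows "S \<le> K\<^sup>2"
proof (cases "S = 0")
  case True then show ?thesis by simp
next
  case False
  then have pos: "sqrt S > 0" using assms by simp
  have "sqrt S * sqrt S \<le> K * sqrt S" using assms by simp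
  then have "sqrt S \<le> K" using pos mult_right_le_imp_le by blast
  then have "(sqrt S)\<^sup>2 \<le> K\<^sup>2" by (rule power_mono) (use assms in simp)
  then show ?thesis using assms by simp
qed

lemma Mform_eq:
  assumes "finite A" "finite B" "\<And>n. n \<notin> A \<Longrightarrow> a n = 0" "\<And>m. m \<notin> B \<Longrightarrow> b m = 0"
  shows "Mform \<alpha> a b = (\<Sum>n\<in>A. \<Sum>m\<in>B. a n * cnj (b m) * \<alpha> (n*m))"
proof -
  have sA: "{n. a n \<noteq> 0} \<subseteq> A" using assms(3) by auto
  have sB: "{m. b m \<noteq> 0} \<subseteq> B" using assms(4) by auto
  have inner: "(\<Sum>m\<in>{m. b m \<noteq> 0}. a n * cnj (b m) * \<alpha> (n*m)) = (\<Sum>m\<in>B. a n * cnj (b m) * \<alpha> (n*m))" for n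
    by (rule sum.mono_neutral_left) (use assms sB in auto)
  have "Mform \<alpha> a b = (\<Sum>n\<in>{n. a n \<noteq> 0}. \<Sum>m\<in>B. a n * cnj (b m) * \<alpha> (n*m))"
    unfolding Mform_def using inner by simp
  also have "\<dots> = (\<Sum>n\<in>A. \<Sum>m\<in>B. a n * cnj (b m) * \<alpha> (n*m))"
    by (rule sum.mono_neutral_left) (use assms sA in auto)
  finally show ?thesis .
qed

definition bndC :: "(nat \<Rightarrow> complex) \<Rightarrow> real \<Rightarrow> bool" where
  "bndC \<alpha> C \<longleftrightarrow> C \<ge> 0 \<and> (\<forall>a b. fin_supp a \<longrightarrow> fin_supp b \<longrightarrow> cmod (Mform \<alpha> a b) \<le> C * l2norm a * l2norm b)"

lemma bounded_M_bndC: "bounded_M \<alpha> \<Longrightarrow> \<exists>C. bndC \<alpha> C"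
proof -
  assume "bounded_M \<alpha>"
  then obtain C where C: "\<forall>a b. fin_supp a \<longrightarrow> fin_supp b \<longrightarrow> cmod (Mform \<alpha> a b) \<le> C * l2norm a * l2norm b"
    unfolding bounded_M_def by blast
  have "cmod (Mform \<alpha> a b) \<le> max C 0 * l2norm a * l2norm b" if "fin_supp a" "fin_supp b" for a b
  proof -
    have "C * l2norm a * l2norm b \<le> max C 0 * l2norm a * l2norm b"
      by (intro mult_right_mono) (auto simp: l2norm_NN NN_nonneg)
    then show ?thesis using C that by (meson order_trans)
  qed
  then show ?thesis unfolding bndC_def by (intro exI[of _ "max C 0"]) auto
qed

lemma row_bound:
  assumes bnd: "bndC \<alpha> C" and m: "m > 0" and F: "finite F" "0 \<notin> F"
  shows "(\<Sum>n\<in>F. (cmod (\<alpha> (n*m)))\<^sup>2) \<le> C\<^sup>2"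
proof -
  define a where "a = (\<lambda>n. if n \<in> F then cnj (\<alpha> (n*m)) else 0)"
  define b where "b = (\<lambda>k. if k = m then (1::complex) else 0)"
  define S where "S = (\<Sum>n\<in>F. (cmod (\<alpha> (n*m)))\<^sup>2)"
  have S0: "S \<ge> 0" unfolding S_def by (intro sum_nonneg) simp
  have fa: "fin_supp a" unfolding fin_supp_def a_def using F
    by (auto intro: finite_subset[of _ F])
  have "{k. b k \<noteq> 0} = {m}" unfolding b_def by auto
  then have fb: "fin_supp b" unfolding fin_supp_def using m by (auto simp: b_def)
  have "Mform \<alpha> a b = (\<Sum>n\<in>F. \<Sum>k\<in>{m}. a n * cnj (b k) * \<alpha> (n*k))"
    by (rule Mform_eq) (use F in \<open>auto simp: a_def b_def\<close>)
  also have "\<dots> = (\<Sum>n\<in>F. cnj (\<alpha> (n*m)) * \<alpha> (n*m))" by (simp add: a_def b_def)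
  also have "\<dots> = (\<Sum>n\<in>F. complex_of_real ((cmod (\<alpha> (n*m)))\<^sup>2))" by (simp only: cnj_mult_self)
  also have "\<dots> = complex_of_real S" unfolding S_def by (simp only: of_real_sum)
  finally have M: "Mform \<alpha> a b = complex_of_real S" .
  have "NN a = (\<Sum>n\<in>F. (cmod (a n))\<^sup>2)" by (rule NN_finite(1)) (use F in \<open>auto simp: a_def\<close>)
  also have "\<dots> = S" unfolding S_def a_def by (intro sum.cong) auto
  finally have la: "l2norm a = sqrt S" by (simp add: l2norm_NN)
  have "NN b = (\<Sum>n\<in>{m}. (cmod (b n))\<^sup>2)" by (rule NN_finite(1)) (auto simp: b_def)
  then have lb: "l2norm b = 1" by (simp add: l2norm_NN b_def)
  have "cmod (Mform \<alpha> a b) \<le> C * l2norm a * l2norm b" using bnd fa fb unfolding bndC_def by blast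
  then have "S \<le> C * sqrt S" using M la lb S0 by simp
  then show ?thesis using sq_bound[OF S0 _] bnd unfolding bndC_def S_def by blast
qed

lemma row_summable:
  assumes bnd: "bndC \<alpha> C" and m: "m > 0"
  shows "(\<lambda>n. (cmod (\<alpha> (n*m)))\<^sup>2) summable_on {1..}"
proof (rule nonneg_bdd_above_summable_on)
  show "bdd_above (sum (\<lambda>n. (cmod (\<alpha> (n*m)))\<^sup>2) ` {F. F \<subseteq> {1..} \<and> finite F})"
    by (rule bdd_aboveI2[where M="C\<^sup>2"]) (use row_bound[OF bnd m] in auto)
qed simp

lemma Mop_summable:
  assumes bnd: "bndC \<alpha> C" and m: "m > 0" and a: "sqs a"
  shows "(\<lambda>n. \<alpha> (n*m) * a n) summable_on {1..}"
proof -
  have g: "(\<lambda>n. (cmod (\<alpha> (n*m)))\<^sup>2 + (cmod (a n))\<^sup>2) summable_on {1..}"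
    using row_summable[OF bnd m] a unfolding sqs_def
    by (intro summable_on_add) (auto intro: summable_on_subset_banach)
  have le: "norm (\<alpha> (n*m) * a n) \<le> (cmod (\<alpha> (n*m)))\<^sup>2 + (cmod (a n))\<^sup>2" for n
  proof -
    have "0 \<le> (cmod (\<alpha> (n*m)) - cmod (a n))\<^sup>2" by simp
    then have "2 * (cmod (\<alpha> (n*m)) * cmod (a n)) \<le> (cmod (\<alpha> (n*m)))\<^sup>2 + (cmod (a n))\<^sup>2"
      unfolding power2_diff by linarith
    moreover have "0 \<le> cmod (\<alpha> (n*m)) * cmod (a n)" by simp
    moreover have "norm (\<alpha> (n*m) * a n) = cmod (\<alpha> (n*m)) * cmod (a n)" by (simp add: norm_mult)
    ultimately show ?thesis by linarith
  qed
  have "(\<lambda>n. norm (\<alpha> (n*m) * a n)) summable_on {1..}"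
    by (rule summable_on_comparison_test[OF g]) (use le in auto)
  then show ?thesis by (rule abs_summable_summable)
qed

lemma Mop_bound:
  assumes bnd: "bndC \<alpha> C" and a: "sqs a"
  shows "sqs (Mop \<alpha> a)" "NN (Mop \<alpha> a) \<le> C\<^sup>2 * NN a"
proof -
  have C0: "C \<ge> 0" using bnd unfolding bndC_def by simp
  define x where "x = Mop \<alpha> a"
  have x0: "x 0 = 0" unfolding x_def Mop_def by simp
  have main: "(\<Sum>k\<in>F. (cmod (x k))\<^sup>2) \<le> C\<^sup>2 * NN a" if F: "finite F" for F
  proof -
    define B where "B = F - {0}"
    have finB: "finite B" using F unfolding B_def by simp
    have Bpos: "k \<in> B \<Longrightarrow> k > 0" for k unfolding B_def by auto
    have "(\<Sum>k\<in>F. (cmod (x k))\<^sup>2) = (\<Sum>k\<in>B. (cmod (x k))\<^sup>2)"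
      unfolding B_def by (rule sum.mono_neutral_right) (use F x0 in auto)
    define b where "b = (\<lambda>k. if k \<in> B then x k else 0)"
    define S where "S = (\<Sum>k\<in>B. (cmod (x k))\<^sup>2)"
    have S0: "S \<ge> 0" unfolding S_def by (intro sum_nonneg) simp
    have "{k. b k \<noteq> 0} \<subseteq> B" unfolding b_def by auto
    then have fb: "fin_supp b" unfolding fin_supp_def using finB
      by (auto simp: b_def B_def intro: finite_subset)
    have "NN b = (\<Sum>k\<in>B. (cmod (b k))\<^sup>2)" by (rule NN_finite(1)) (use finB in \<open>auto simp: b_def\<close>)
    also have "\<dots> = S" unfolding S_def b_def by (intro sum.cong) auto
    finally have lb: "l2norm b = sqrt S" by (simp add: l2norm_NN)
    define g where "g = (\<lambda>n. \<Sum>k\<in>B. cnj (b k) * (\<alpha> (n*k) * a n))"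
    have gs: "g summable_on {1..} \<and> infsum g {1..} = (\<Sum>k\<in>B. infsum (\<lambda>n. cnj (b k) * (\<alpha> (n*k) * a n)) {1..})"
      unfolding g_def
      by (rule has_sum_sum'[OF finB]) (use Mop_summable[OF bnd _ a] Bpos in \<open>auto intro: summable_on_cmult_right\<close>)
    have "complex_of_real S = (\<Sum>k\<in>B. cnj (b k) * x k)"
      unfolding S_def by (simp only: of_real_sum) (intro sum.cong refl, simp add: b_def cnj_mult_self)
    also have "\<dots> = (\<Sum>k\<in>B. infsum (\<lambda>n. cnj (b k) * (\<alpha> (n*k) * a n)) {1..})"
      by (intro sum.cong refl) (use Bpos in \<open>auto simp: x_def Mop_def infsum_cmult_right'\<close>)
    also have "\<dots> = infsum g {1..}" using gs by simp
    finally have SG: "complex_of_real S = infsum g {1..}" .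
    have partial: "cmod (sum g A) \<le> C * sqrt (NN a) * sqrt S" if A: "finite A" "A \<subseteq> {1..}" for A
    proof -
      define aA where "aA = (\<lambda>n. if n \<in> A then a n else 0)"
      have "{n. aA n \<noteq> 0} \<subseteq> A" unfolding aA_def by auto
      then have faA: "fin_supp aA" unfolding fin_supp_def using A
        by (auto simp: aA_def intro: finite_subset)
      have "Mform \<alpha> aA b = (\<Sum>n\<in>A. \<Sum>k\<in>B. aA n * cnj (b k) * \<alpha> (n*k))"
        by (rule Mform_eq) (use A finB in \<open>auto simp: aA_def b_def\<close>)
      also have "\<dots> = sum g A" unfolding g_def aA_def
        by (intro sum.cong refl) (auto simp: ac_simps)
      finally have "sum g A = Mform \<alpha> aA b" by simp
      then have "cmod (sum g A) \<le> C * l2norm aA * l2norm b" using bnd faA fb unfolding bndC_def by auto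
      moreover have laA: "l2norm aA \<le> sqrt (NN a)"
      proof -
        have "NN aA = (\<Sum>n\<in>A. (cmod (aA n))\<^sup>2)" by (rule NN_finite(1)) (use A in \<open>auto simp: aA_def\<close>)
        also have "\<dots> = (\<Sum>n\<in>A. (cmod (a n))\<^sup>2)" unfolding aA_def by (intro sum.cong) auto
        also have "\<dots> \<le> NN a" by (rule sum_le_NN[OF a A(1)])
        finally show ?thesis by (simp add: l2norm_NN)
      qed
      moreover have "C * l2norm aA * l2norm b \<le> C * sqrt (NN a) * sqrt S"
      proof -
        have "C * l2norm aA \<le> C * sqrt (NN a)" by (rule mult_left_mono[OF laA C0])
        then have "C * l2norm aA * sqrt S \<le> C * sqrt (NN a) * sqrt S" by (rule mult_right_mono) (simp add: S0)
        then show ?thesis using lb by simp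
      qed
      ultimately show ?thesis by linarith
    qed
    have "cmod (infsum g {1..}) \<le> C * sqrt (NN a) * sqrt S"
    proof (rule Lim_norm_ubound)
      show "\<not> trivial_limit (finite_subsets_at_top {1::nat..})" by simp
      show "(sum g \<longlongrightarrow> infsum g {1..}) (finite_subsets_at_top {1..})"
        using gs infsum_tendsto by blast
      show "\<forall>\<^sub>F A in finite_subsets_at_top {1..}. cmod (sum g A) \<le> C * sqrt (NN a) * sqrt S"
        using partial by (intro eventually_finite_subsets_at_top_weakI) auto
    qed
    moreover have "cmod (infsum g {1..}) = S" using SG[symmetric] S0 by simp
    ultimately have "S \<le> (C * sqrt (NN a)) * sqrt S" by simp
    then have "S \<le> (C * sqrt (NN a))\<^sup>2" using sq_bound[OF S0, of "C * sqrt (NN a)"] C0 NN_nonneg[of a] by simp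
    also have "\<dots> = C\<^sup>2 * NN a" using NN_nonneg[of a] by (simp add: power_mult_distrib)
    finally show ?thesis using \<open>(\<Sum>k\<in>F. (cmod (x k))\<^sup>2) = (\<Sum>k\<in>B. (cmod (x k))\<^sup>2)\<close> S_def by simp
  qed
  show "sqs (Mop \<alpha> a)" using sqs_NN_bound(1)[OF main] x_def by simp
  show "NN (Mop \<alpha> a) \<le> C\<^sup>2 * NN a" using sqs_NN_bound(2)[OF main] x_def by simp
qed

lemma Mop_diff:
  assumes bnd: "bndC \<alpha> C" and "sqs a" "sqs b"
  shows "Mop \<alpha> (\<lambda>n. a n - b n) = (\<lambda>m. Mop \<alpha> a m - Mop \<alpha> b m)"
proof
  fix m show "Mop \<alpha> (\<lambda>n. a n - b n) m = Mop \<alpha> a m - Mop \<alpha> b m"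
  proof (cases "m = 0")
    case True then show ?thesis by (simp add: Mop_def)
  next
    case False
    then have "infsum (\<lambda>n. \<alpha> (n*m) * a n - \<alpha> (n*m) * b n) {1..} =
       infsum (\<lambda>n. \<alpha> (n*m) * a n) {1..} - infsum (\<lambda>n. \<alpha> (n*m) * b n) {1..}"
      using Mop_summable[OF bnd _ assms(2)] Mop_summable[OF bnd _ assms(3)] by (intro infsum_diff') auto
    then show ?thesis using False by (simp add: Mop_def right_diff_distrib)
  qed
qed

lemma Mop_Dr: "Mop (Dr r \<alpha>) a = Dr r (Mop \<alpha> (Dr r a))"
proof
  fix m show "Mop (Dr r \<alpha>) a m = Dr r (Mop \<alpha> (Dr r a)) m"
  proof (cases "m = 0")
    case True then show ?thesis by (simp add: Mop_def Dr_def)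
  next
    case False
    have "infsum (\<lambda>n. Dr r \<alpha> (n*m) * a n) {1..} =
          infsum (\<lambda>n. complex_of_real (r ^ weight m) * (\<alpha> (n*m) * Dr r a n)) {1..}"
    proof (rule infsum_cong)
      fix n :: nat assume "n \<in> {1..}"
      then have "weight (n*m) = weight n + weight m" using False by (intro weight_mult) auto
      then show "Dr r \<alpha> (n*m) * a n = complex_of_real (r ^ weight m) * (\<alpha> (n*m) * Dr r a n)"
        by (simp add: Dr_def power_add ac_simps)
    qed
    also have "\<dots> = complex_of_real (r ^ weight m) * infsum (\<lambda>n. \<alpha> (n*m) * Dr r a n) {1..}"
      by (rule infsum_cmult_right')
    finally show ?thesis using False by (simp add: Mop_def Dr_def)
  qed
qed

lemma Madj_eq: "Madj \<alpha> a = (\<lambda>m. cnj (Mop \<alpha> (\<lambda>n. cnj (a n)) m))"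
proof
  fix m show "Madj \<alpha> a m = cnj (Mop \<alpha> (\<lambda>n. cnj (a n)) m)"
  proof (cases "m = 0")
    case True then show ?thesis by (simp add: Mop_def Madj_def)
  next
    case False
    have "cnj (infsum (\<lambda>n. \<alpha> (n*m) * cnj (a n)) {1..}) = infsum (\<lambda>n. cnj (\<alpha> (n*m) * cnj (a n))) {1..}"
      by (subst infsum_cnj[symmetric]) simp
    also have "\<dots> = infsum (\<lambda>n. cnj (\<alpha> (n*m)) * a n) {1..}" by simp
    finally show ?thesis using False unfolding Mop_def Madj_def by simp
  qed
qed

lemma Dr_diff_le:
  assumes "0 \<le> r" "r \<le> 1"
  shows "(cmod (Dr r b m - b m))\<^sup>2 \<le> (cmod (b m))\<^sup>2"
proof -
  have "Dr r b m - b m = complex_of_real (r ^ weight m - 1) * b m"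
    by (simp add: Dr_def algebra_simps)
  then have "cmod (Dr r b m - b m) = \<bar>r ^ weight m - 1\<bar> * cmod (b m)"
    by (simp only: norm_mult norm_of_real)
  also have "\<dots> \<le> 1 * cmod (b m)"
    by (rule mult_right_mono) (use assms in \<open>auto simp: power_le_one\<close>)
  finally show ?thesis by (intro power_mono) auto
qed

lemma Dr_tendsto:
  assumes "sqs b"
  shows "((\<lambda>r. NN (\<lambda>m. Dr r b m - b m)) \<longlongrightarrow> 0) (at_left 1)"
proof -
  define f where "f = (\<lambda>m (r::real). (cmod (Dr r b m - b m))\<^sup>2)"
  define G where "G = (\<lambda>r. infsum (\<lambda>m. f m r) UNIV)"
  have G_eq: "NN (\<lambda>m. Dr r b m - b m) = G r" for r by (simp add: NN_def G_def f_def)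
  have bound: "norm (f m r) \<le> (cmod (b m))\<^sup>2" if "m \<in> UNIV" "r \<in> {0..1}" for m r
    using Dr_diff_le[of r b m] that by (simp add: f_def)
  have ul: "uniform_limit {0..1} (\<lambda>X r. \<Sum>m\<in>X. f m r) G (finite_subsets_at_top UNIV)"
    unfolding G_def by (rule Weierstrass_m_test_general[OF bound]) (use assms in \<open>auto simp: sqs_def\<close>)
  have cont: "continuous_on {0..1} G"
  proof (rule uniform_limit_theorem[OF _ ul])
    show "\<forall>\<^sub>F X in finite_subsets_at_top UNIV. continuous_on {0..1} (\<lambda>r. \<Sum>m\<in>X. f m r)"
      by (intro always_eventually allI continuous_on_sum) (auto simp: f_def Dr_def intro!: continuous_intros)
  qed simp
  have G1: "G 1 = 0" by (simp add: G_def f_def Dr_def)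
  have "(G \<longlongrightarrow> G 1) (at 1 within {0..1})" using cont by (simp add: continuous_on_def)
  then have "(G \<longlongrightarrow> 0) (at_left 1)" using G1 at_within_Icc_at_left[of "0::real" 1] by simp
  then show ?thesis using G_eq by simp
qed

lemma NN_le_comb:
  assumes "sqs a" "sqs b" "\<delta> \<ge> 0" "\<And>m. (cmod (x m))\<^sup>2 \<le> (cmod (a m))\<^sup>2 + \<delta> * (cmod (b m))\<^sup>2"
  shows "sqs x" "NN x \<le> NN a + \<delta> * NN b"
proof -
  have s: "(\<lambda>m. (cmod (a m))\<^sup>2 + \<delta> * (cmod (b m))\<^sup>2) summable_on UNIV"
    using assms unfolding sqs_def by (intro summable_on_add summable_on_cmult_right)
  show sx: "sqs x" unfolding sqs_def
    by (rule summable_on_comparison_test[OF s]) (use assms in auto)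
  have "NN x \<le> infsum (\<lambda>m. (cmod (a m))\<^sup>2 + \<delta> * (cmod (b m))\<^sup>2) UNIV"
    unfolding NN_def by (rule infsum_mono) (use sx s assms in \<open>auto simp: sqs_def\<close>)
  also have "\<dots> = NN a + \<delta> * NN b" unfolding NN_def
    using assms unfolding sqs_def
    by (subst infsum_add) (auto intro: summable_on_cmult_right simp: infsum_cmult_right')
  finally show "NN x \<le> NN a + \<delta> * NN b" .
qed

lemma diag_compact:
  fixes u :: "nat \<Rightarrow> nat \<Rightarrow> complex" and r B :: real
  assumes u: "\<And>k. sqs (u k) \<and> NN (u k) \<le> B \<and> u k 0 = 0" and r: "0 < r" "r < 1"
  shows "\<exists>s v. strict_mono s \<and> sqs v \<and> v 0 = 0 \<and>
           (\<lambda>k. NN (\<lambda>m. Dr r (u (s k)) m - Dr r v m)) \<longlonglongrightarrow> 0"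
proof -
  have B0: "B \<ge> 0" using u[of 0] NN_nonneg[of "u 0"] by linarith
  define c where "c = sqrt B"
  have ub: "cmod (u k m) \<le> c" for k m
  proof -
    have "(\<Sum>n\<in>{m}. (cmod (u k n))\<^sup>2) \<le> NN (u k)" using u by (intro sum_le_NN) auto
    then have "(cmod (u k m))\<^sup>2 \<le> B" using u[of k] by simp
    then show ?thesis unfolding c_def by (rule real_le_rsqrt)
  qed
  define K where "K = PiE (UNIV :: nat set) (\<lambda>_. cball (0::complex) c)"
  have "compactin (product_topology (\<lambda>_. euclidean) UNIV) K"
    unfolding K_def by (subst compactin_PiE) auto
  then have "compact K" by (simp add: euclidean_product_topology)
  then have "seq_compact K" by (rule compact_imp_seq_compact)
  moreover have "\<forall>k. u k \<in> K" using ub unfolding K_def by auto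
  ultimately obtain v s where s: "strict_mono (s :: nat \<Rightarrow> nat)" and lim: "(u \<circ> s) \<longlonglongrightarrow> v"
    by (metis seq_compactE)
  have pw: "(\<lambda>k. u (s k) m) \<longlonglongrightarrow> v m" for m
    using continuous_on_tendsto_compose[OF continuous_on_product_coordinates[of m] lim] by (simp add: o_def)
  have v0: "v 0 = 0"
  proof -
    have "(\<lambda>k. u (s k) 0) \<longlonglongrightarrow> 0" using u by simp
    then show ?thesis using pw[of 0] LIMSEQ_unique by blast
  qed
  have vF: "(\<Sum>m\<in>F. (cmod (v m))\<^sup>2) \<le> B" if F: "finite F" for F
  proof (rule LIMSEQ_le_const2)
    show "(\<lambda>k. \<Sum>m\<in>F. (cmod (u (s k) m))\<^sup>2) \<longlonglongrightarrow> (\<Sum>m\<in>F. (cmod (v m))\<^sup>2)"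
      by (intro tendsto_intros pw)
    show "\<exists>N. \<forall>k\<ge>N. (\<Sum>m\<in>F. (cmod (u (s k) m))\<^sup>2) \<le> B"
      using sum_le_NN[OF _ F] u order_trans by blast
  qed
  have sv: "sqs v" "NN v \<le> B" using sqs_NN_bound[OF vF] by auto
  define d where "d = (\<lambda>k m. u (s k) m - v m)"
  have sd: "sqs (d k)" "NN (d k) \<le> 4 * B" for k
    using sqs_diff[of "u (s k)" v] u[of "s k"] sv unfolding d_def by auto
  have eq: "(\<lambda>m. Dr r (u (s k)) m - Dr r v m) = (\<lambda>m. complex_of_real (r ^ weight m) * d k m)" for k
    by (auto simp: Dr_def d_def algebra_simps)
  have "(\<lambda>k. NN (\<lambda>m. complex_of_real (r ^ weight m) * d k m)) \<longlonglongrightarrow> 0"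
  proof (rule tendstoI)
    fix \<epsilon> :: real assume e: "\<epsilon> > 0"
    define \<delta> where "\<delta> = \<epsilon> / (8 * B + 1)"
    have d0: "\<delta> > 0" unfolding \<delta>_def using e B0 by simp
    have "(\<lambda>n. r ^ n) \<longlonglongrightarrow> 0" using r by (intro LIMSEQ_power_zero) simp
    then have "eventually (\<lambda>n. r ^ n < \<delta>) sequentially" using d0 by (rule order_tendstoD)
    then obtain K0 where K0: "r ^ K0 < \<delta>" by (auto simp: eventually_sequentially)
    define F where "F = {m. weight m \<le> K0}"
    have finF: "finite F" unfolding F_def by (rule finite_weight_le)
    define e where "e = (\<lambda>k m. if m \<in> F then d k m else 0)"
    have eN: "NN (e k) = (\<Sum>m\<in>F. (cmod (d k m))\<^sup>2)" "sqs (e k)" for k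
    proof -
      have "NN (e k) = (\<Sum>m\<in>F. (cmod (e k m))\<^sup>2)" "sqs (e k)"
        by (rule NN_finite[OF finF]; simp add: e_def)+
      then show "NN (e k) = (\<Sum>m\<in>F. (cmod (d k m))\<^sup>2)" "sqs (e k)" by (auto simp: e_def)
    qed
    have pt: "(cmod (complex_of_real (r ^ weight m) * d k m))\<^sup>2 \<le> (cmod (e k m))\<^sup>2 + \<delta> * (cmod (d k m))\<^sup>2" for k m
    proof -
      have rw0: "0 \<le> r ^ weight m" "r ^ weight m \<le> 1" using r by (auto simp: power_le_one)
      have "(cmod (complex_of_real (r ^ weight m) * d k m))\<^sup>2 = (r ^ weight m)\<^sup>2 * (cmod (d k m))\<^sup>2"
        using r by (simp add: norm_mult norm_power power_mult_distrib)
      also have "\<dots> \<le> (cmod (e k m))\<^sup>2 + \<delta> * (cmod (d k m))\<^sup>2"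
      proof (cases "m \<in> F")
        case True
        have "(r ^ weight m)\<^sup>2 \<le> 1" using rw0 by (simp add: power_le_one)
        then have "(r ^ weight m)\<^sup>2 * (cmod (d k m))\<^sup>2 \<le> 1 * (cmod (d k m))\<^sup>2" by (rule mult_right_mono) simp
        moreover have "0 \<le> \<delta> * (cmod (d k m))\<^sup>2" using d0 by simp
        ultimately show ?thesis using True by (simp add: e_def)
      next
        case False
        then have "K0 \<le> weight m" unfolding F_def by simp
        then have "r ^ weight m \<le> r ^ K0" using r by (intro power_decreasing) auto
        then have "r ^ weight m < \<delta>" using K0 by simp
        moreover have "(r ^ weight m)\<^sup>2 \<le> r ^ weight m" using rw0 by (simp add: power2_eq_square mult_left_le_one_le)
        ultimately have "(r ^ weight m)\<^sup>2 \<le> \<delta>" by simp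
        then have "(r ^ weight m)\<^sup>2 * (cmod (d k m))\<^sup>2 \<le> \<delta> * (cmod (d k m))\<^sup>2" by (rule mult_right_mono) simp
        then show ?thesis using False by (simp add: e_def)
      qed
      finally show ?thesis .
    qed
    have NNle: "NN (\<lambda>m. complex_of_real (r ^ weight m) * d k m) \<le> (\<Sum>m\<in>F. (cmod (d k m))\<^sup>2) + \<delta> * (4 * B)" for k
    proof -
      have "NN (\<lambda>m. complex_of_real (r ^ weight m) * d k m) \<le> NN (e k) + \<delta> * NN (d k)"
        by (rule NN_le_comb(2)[OF eN(2) sd(1)]) (use d0 pt in auto)
      moreover have "\<delta> * NN (d k) \<le> \<delta> * (4 * B)" using sd(2) d0 by (intro mult_left_mono) auto
      ultimately show ?thesis using eN(1) by simp
    qed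
    have small: "\<delta> * (4 * B) < \<epsilon> / 2"
    proof -
      have "\<delta> * (4 * B) = \<epsilon> * (4 * B) / (8 * B + 1)" unfolding \<delta>_def by simp
      also have "\<dots> < \<epsilon> / 2" using e B0 by (simp add: field_simps)
      finally show ?thesis .
    qed
    have "(\<lambda>k. \<Sum>m\<in>F. (cmod (d k m))\<^sup>2) \<longlonglongrightarrow> (\<Sum>m\<in>F. (cmod (v m - v m))\<^sup>2)"
      unfolding d_def by (intro tendsto_intros pw)
    then have "(\<lambda>k. \<Sum>m\<in>F. (cmod (d k m))\<^sup>2) \<longlonglongrightarrow> 0" by simp
    then have "eventually (\<lambda>k. (\<Sum>m\<in>F. (cmod (d k m))\<^sup>2) < \<epsilon> / 2) sequentially"
      using e by (intro order_tendstoD) auto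
    then show "eventually (\<lambda>k. dist (NN (\<lambda>m. complex_of_real (r ^ weight m) * d k m)) 0 < \<epsilon>) sequentially"
    proof eventually_elim
      case (elim k)
      then show ?case using NNle[of k] small NN_nonneg[of "\<lambda>m. complex_of_real (r ^ weight m) * d k m"]
        by (simp add: dist_real_def)
    qed
  qed
  then have "(\<lambda>k. NN (\<lambda>m. Dr r (u (s k)) m - Dr r v m)) \<longlonglongrightarrow> 0" by (simp only: eq)
  then show ?thesis using s sv v0 by blast
qed

lemma Mop_l2:
  assumes bnd: "bndC \<alpha> C" and a: "a \<in> l2"
  shows "Mop \<alpha> a \<in> l2" "NN (Mop \<alpha> a) \<le> C\<^sup>2 * NN a"
  using Mop_bound[OF bnd] a by (auto simp: l2_iff Mop_def)

lemma strong_conv: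
  assumes bnd: "bndC \<alpha> C" and a: "a \<in> l2"
  shows "((\<lambda>r. l2norm (\<lambda>m. Mop (Dr r \<alpha>) a m - Mop \<alpha> a m)) \<longlongrightarrow> 0) (at_left 1)"
proof -
  define b where "b = Mop \<alpha> a"
  have sa: "sqs a" using a by (simp add: l2_iff)
  have sb: "sqs b" using Mop_l2[OF bnd a] by (simp add: b_def l2_iff)
  define g where "g = (\<lambda>r. 2 * C\<^sup>2 * NN (\<lambda>n. Dr r a n - a n) + 2 * NN (\<lambda>m. Dr r b m - b m))"
  have gl: "(g \<longlongrightarrow> 2 * C\<^sup>2 * 0 + 2 * 0) (at_left 1)"
    unfolding g_def by (intro tendsto_intros Dr_tendsto sa sb)
  have ev: "eventually (\<lambda>r. 0 < r \<and> r < (1::real)) (at_left 1)"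
    using eventually_at_left_real[of 0 "1::real"] by simp
  have le: "NN (\<lambda>m. Mop (Dr r \<alpha>) a m - Mop \<alpha> a m) \<le> g r" if r: "0 < r" "r < 1" for r
  proof -
    define c where "c = (\<lambda>n. Dr r a n - a n)"
    have sDa: "sqs (Dr r a)" using Dr_sqs[of r a] r sa by simp
    have sc: "sqs c" unfolding c_def using sqs_diff(1)[OF sDa sa] .
    have md: "Mop \<alpha> c = (\<lambda>m. Mop \<alpha> (Dr r a) m - b m)"
      unfolding c_def b_def by (rule Mop_diff[OF bnd sDa sa])
    have smc: "sqs (Mop \<alpha> c)" "NN (Mop \<alpha> c) \<le> C\<^sup>2 * NN c" using Mop_bound[OF bnd sc] by auto
    have s1: "sqs (Dr r (Mop \<alpha> c))" "NN (Dr r (Mop \<alpha> c)) \<le> NN (Mop \<alpha> c)"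
      using Dr_sqs[of r "Mop \<alpha> c"] r smc by auto
    have s2: "sqs (\<lambda>m. Dr r b m - b m)"
      using sqs_diff(1)[of "Dr r b" b] Dr_sqs[of r b] r sb by auto
    have eq: "(\<lambda>m. Mop (Dr r \<alpha>) a m - Mop \<alpha> a m) = (\<lambda>m. Dr r (Mop \<alpha> c) m + (Dr r b m - b m))"
    proof
      fix m
      have "Mop (Dr r \<alpha>) a m = Dr r (Mop \<alpha> (Dr r a)) m" by (simp add: Mop_Dr)
      also have "\<dots> = Dr r (Mop \<alpha> c) m + Dr r b m"
      proof -
        have "Mop \<alpha> (Dr r a) m = Mop \<alpha> c m + b m" using fun_cong[OF md, of m] by simp
        then show ?thesis by (simp add: Dr_def distrib_left)
      qed
      finally show "Mop (Dr r \<alpha>) a m - Mop \<alpha> a m = Dr r (Mop \<alpha> c) m + (Dr r b m - b m)"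
        by (simp add: b_def)
    qed
    have "NN (\<lambda>m. Mop (Dr r \<alpha>) a m - Mop \<alpha> a m) \<le> 2 * NN (Dr r (Mop \<alpha> c)) + 2 * NN (\<lambda>m. Dr r b m - b m)"
      unfolding eq using sqs_add(2)[OF s1(1) s2] by simp
    also have "\<dots> \<le> 2 * (C\<^sup>2 * NN c) + 2 * NN (\<lambda>m. Dr r b m - b m)"
      using s1(2) smc(2) by simp
    finally show ?thesis by (simp add: g_def c_def)
  qed
  have "((\<lambda>r. NN (\<lambda>m. Mop (Dr r \<alpha>) a m - Mop \<alpha> a m)) \<longlongrightarrow> 0) (at_left 1)"
  proof (rule tendsto_sandwich[where f="\<lambda>_. 0" and h=g])
    show "eventually (\<lambda>r. 0 \<le> NN (\<lambda>m. Mop (Dr r \<alpha>) a m - Mop \<alpha> a m)) (at_left 1)"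
      by (simp add: NN_nonneg)
    show "eventually (\<lambda>r. NN (\<lambda>m. Mop (Dr r \<alpha>) a m - Mop \<alpha> a m) \<le> g r) (at_left 1)"
      using ev by eventually_elim (use le in auto)
    show "(g \<longlongrightarrow> 0) (at_left 1)" using gl by simp
  qed simp
  then have "((\<lambda>r. sqrt (NN (\<lambda>m. Mop (Dr r \<alpha>) a m - Mop \<alpha> a m))) \<longlongrightarrow> sqrt 0) (at_left 1)"
    by (rule tendsto_real_sqrt)
  then show ?thesis by (simp add: l2norm_NN)
qed

lemma adj_conv:
  assumes bnd: "bndC \<alpha> C" and a: "a \<in> l2"
  shows "((\<lambda>r. l2norm (\<lambda>m. Madj (Dr r \<alpha>) a m - Madj \<alpha> a m)) \<longlongrightarrow> 0) (at_left 1)"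
proof -
  define a' where "a' = (\<lambda>n. cnj (a n))"
  have a': "a' \<in> l2" using a sqs_cnj[of a] by (simp add: a'_def l2_iff)
  have eq: "l2norm (\<lambda>m. Madj (Dr r \<alpha>) a m - Madj \<alpha> a m) = l2norm (\<lambda>m. Mop (Dr r \<alpha>) a' m - Mop \<alpha> a' m)" for r
  proof -
    have "(\<lambda>m. Madj (Dr r \<alpha>) a m - Madj \<alpha> a m) = (\<lambda>m. cnj (Mop (Dr r \<alpha>) a' m - Mop \<alpha> a' m))"
      by (simp add: Madj_eq a'_def)
    then show ?thesis using sqs_cnj(2)[of "\<lambda>m. Mop (Dr r \<alpha>) a' m - Mop \<alpha> a' m"] by (simp add: l2norm_NN)
  qed
  show ?thesis unfolding eq by (rule strong_conv[OF bnd a'])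
qed

lemma compact_part:
  assumes bnd: "bndC \<alpha> C" and r: "0 < r" "r < 1"
  shows "compact_M (Dr r \<alpha>)"
  unfolding compact_M_def
proof (intro conjI ballI allI impI)
  fix a assume a: "a \<in> l2"
  have "Dr r a \<in> l2" using Dr_l2 r a by simp
  then have "Mop \<alpha> (Dr r a) \<in> l2" by (rule Mop_l2[OF bnd])
  then have "Dr r (Mop \<alpha> (Dr r a)) \<in> l2" using Dr_l2 r by simp
  then show "Mop (Dr r \<alpha>) a \<in> l2" by (simp add: Mop_Dr)
next
  fix x :: "nat \<Rightarrow> nat \<Rightarrow> complex"
  assume x: "\<forall>k. x k \<in> l2 \<and> l2norm (x k) \<le> 1"
  define u where "u = (\<lambda>k. Mop \<alpha> (Dr r (x k)))"
  have u: "sqs (u k) \<and> NN (u k) \<le> C\<^sup>2 \<and> u k 0 = 0" for k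
  proof -
    have xk: "sqs (x k)" "NN (x k) \<le> 1" using x[rule_format, of k]
      by (auto simp: l2_iff l2norm_NN)
    have d: "sqs (Dr r (x k))" "NN (Dr r (x k)) \<le> NN (x k)" using Dr_sqs[of r "x k"] r xk by auto
    have "NN (u k) \<le> C\<^sup>2 * NN (Dr r (x k))" unfolding u_def by (rule Mop_bound(2)[OF bnd d(1)])
    also have "\<dots> \<le> C\<^sup>2 * 1" using d(2) xk(2) by (intro mult_left_mono) auto
    finally show ?thesis using Mop_bound(1)[OF bnd d(1)] by (simp add: u_def Mop_def)
  qed
  obtain s v where s: "strict_mono s" "sqs v" "v 0 = 0"
    and lim: "(\<lambda>k. NN (\<lambda>m. Dr r (u (s k)) m - Dr r v m)) \<longlonglongrightarrow> 0"
    using diag_compact[of u "C\<^sup>2" r, OF u r] by blast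
  have y: "Dr r v \<in> l2" using Dr_l2[of r v] r s by (simp add: l2_iff)
  have "(\<lambda>k. sqrt (NN (\<lambda>m. Dr r (u (s k)) m - Dr r v m))) \<longlonglongrightarrow> sqrt 0"
    using lim by (rule tendsto_real_sqrt)
  then have "(\<lambda>k. l2norm (\<lambda>m. Mop (Dr r \<alpha>) (x (s k)) m - Dr r v m)) \<longlonglongrightarrow> 0"
    by (simp add: l2norm_NN Mop_Dr u_def)
  then show "\<exists>s y. strict_mono s \<and> y \<in> l2 \<and> (\<lambda>k. l2norm (\<lambda>m. Mop (Dr r \<alpha>) (x (s k)) m - y m)) \<longlonglongrightarrow> 0"
    using s y by blast
qed

lemma norm_part:
  assumes bnd: "bndC \<alpha> C" and r: "0 < r" "r < 1"
  shows "Mnorm (Dr r \<alpha>) \<le> Mnorm \<alpha>"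
proof -
  define S where "S = (\<lambda>\<beta>. {l2norm (Mop \<beta> a) | a. a \<in> l2 \<and> l2norm a \<le> 1})"
  have C0: "C \<ge> 0" using bnd by (simp add: bndC_def)
  have bdd: "bdd_above (S \<alpha>)"
  proof (rule bdd_aboveI[where M=C])
    fix t assume "t \<in> S \<alpha>"
    then obtain a where "a \<in> l2 \<and> l2norm a \<le> 1" and t: "t = l2norm (Mop \<alpha> a)" unfolding S_def by blast
    then have "NN (Mop \<alpha> a) \<le> C\<^sup>2 * NN a" "NN a \<le> 1" using Mop_l2[OF bnd] by (auto simp: l2norm_NN)
    then have "NN (Mop \<alpha> a) \<le> C\<^sup>2" using C0
      by (meson mult_left_le order_trans zero_le_power2)
    then show "t \<le> C" unfolding t using C0 by (simp add: l2norm_NN real_sqrt_le_iff real_le_lsqrt)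
  qed
  have "Sup (S (Dr r \<alpha>)) \<le> Sup (S \<alpha>)"
  proof (rule cSup_least)
    have "(\<lambda>_. 0) \<in> l2" by (simp add: l2_def)
    then show "S (Dr r \<alpha>) \<noteq> {}" unfolding S_def by (auto simp: l2norm_def intro!: exI[of _ "\<lambda>_. 0"])
  next
    fix t assume "t \<in> S (Dr r \<alpha>)"
    then obtain a where a: "a \<in> l2" "l2norm a \<le> 1" and t: "t = l2norm (Mop (Dr r \<alpha>) a)"
      unfolding S_def by blast
    have sa: "sqs a" using a by (simp add: l2_iff)
    have Da: "Dr r a \<in> l2" "NN (Dr r a) \<le> NN a" using Dr_l2[of r a] Dr_sqs[of r a] r a sa by auto
    then have "l2norm (Dr r a) \<le> 1" using a(2) by (simp add: l2norm_NN)
    then have mem: "l2norm (Mop \<alpha> (Dr r a)) \<in> S \<alpha>" unfolding S_def using Da by blast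
    have sm: "sqs (Mop \<alpha> (Dr r a))" using Mop_l2(1)[OF bnd Da(1)] by (simp add: l2_iff)
    have "t = l2norm (Dr r (Mop \<alpha> (Dr r a)))" by (simp add: t Mop_Dr)
    also have "\<dots> \<le> l2norm (Mop \<alpha> (Dr r a))"
      using Dr_sqs[of r "Mop \<alpha> (Dr r a)"] r sm by (simp add: l2norm_NN)
    also have "\<dots> \<le> Sup (S \<alpha>)" by (rule cSup_upper[OF mem bdd])
    finally show "t \<le> Sup (S \<alpha>)" .
  qed
  then show ?thesis unfolding Mnorm_def S_def by simp
qed

theorem lemma4:
  fixes \<alpha> :: "nat \<Rightarrow> complex"
  assumes "bounded_M \<alpha>"
  shows "(\<forall>r. 0 < r \<and> r < 1 \<longrightarrow>
           compact_M (Dr r \<alpha>) \<and> Mnorm (Dr r \<alpha>) \<le> Mnorm \<alpha>)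
       \<and> (\<forall>a\<in>l2. ((\<lambda>r. l2norm (\<lambda>m. Mop (Dr r \<alpha>) a m - Mop \<alpha> a m)) \<longlongrightarrow> 0) (at_left 1))
       \<and> (\<forall>a\<in>l2. ((\<lambda>r. l2norm (\<lambda>m. Madj (Dr r \<alpha>) a m - Madj \<alpha> a m)) \<longlongrightarrow> 0) (at_left 1))"
proof -
  obtain C where bnd: "bndC \<alpha> C" using bounded_M_bndC[OF assms] by blast
  show ?thesis using compact_part[OF bnd] norm_part[OF bnd] strong_conv[OF bnd] adj_conv[OF bnd] by blast
qed

end
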